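(* Let $N\ge 2$ and $R\ge 3$, and let $S=\lfloor R/3\rfloor$. For every randomized online algorithm for routing in the Clos network $C_{N,R}$, there is a sequence of flows, each with demand $1$ (and satisfying the demand assumption below), for which the expected congestion of the routing returned by the algorithm is at least $2-\tfrac{1}{2^S}$.
   Context: Clos network $C_{N,R}$: a directed graph with $N$ middle switches $M_1,\dots,M_N$, $R$ input switches $I_1,\dots,I_R$, $R$ output switches $O_1,\dots,O_R$, source servers $s_i^k$ and destination servers $t_i^k$ ($i\in[R]$, $k\in[N]$), and edges $s_i^kI_i$, $I_iM_m$, $M_mO_i$, $O_it_i^k$ for all $i\in[R]$, $m,k\in[N]$; all links have capacity $1$. A flow $f$ has a source server $s(f)$ of input switch $I_{i(f)}$, a destination server $t(f)$ of output switch $O_{j(f)}$, and a positive demand $\mathrm{dem}(f)$; a set of flows must have total demand at most $1$ leaving each source server and entering each destination server. A routing $r$ assigns each flow a single middle switch $r(f)\in[N]$; its congestion is $\max_{i\in[R],m\in[N]}\max\{\sum_{f:i(f)=i,r(f)=m}\mathrm{dem}(f),\ \sum_{f:j(f)=i,r(f)=m}\mathrm{dem}(f)\}$. A deterministic online algorithm defines a routing for every sequence of flows such that for every prefix $P$ of a sequence $F$, the routing of $P$ when given $P$ equals the routing of $P$ when given $F$. A randomized online algorithm is a probability distribution over deterministic online algorithms. *)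

theory Defs
  imports "HOL-Probability.Probability"
begin

text \<open>Indices are 0-based: input/output switches 0..<R, middle switches and
server indices 0..<N.\<close>

datatype flow = Flow (src_sw: nat) (src_idx: nat) (dst_sw: nat) (dst_idx: nat) (dem: real)

definition valid_flow :: "nat \<Rightarrow> nat \<Rightarrow> flow \<Rightarrow> bool" where
  "valid_flow N R f \<longleftrightarrow> src_sw f < R \<and> src_idx f < N \<and> dst_sw f < R \<and> dst_idx f < N \<and> dem f > 0"

definition valid_seq :: "nat \<Rightarrow> nat \<Rightarrow> flow list \<Rightarrow> bool" where
  "valid_seq N R F \<longleftrightarrow> (\<forall>f\<in>set F. valid_flow N R f)
     \<and> (\<forall>i<R. \<forall>k<N. sum_list (map dem (filter (\<lambda>f. src_sw f = i \<and> src_idx f = k) F)) \<le> 1)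
     \<and> (\<forall>j<R. \<forall>k<N. sum_list (map dem (filter (\<lambda>f. dst_sw f = j \<and> dst_idx f = k) F)) \<le> 1)"

text \<open>A routing of F: the l-th flow is routed through middle switch r ! l.\<close>
definition is_routing :: "nat \<Rightarrow> flow list \<Rightarrow> nat list \<Rightarrow> bool" where
  "is_routing N F r \<longleftrightarrow> length r = length F \<and> (\<forall>m\<in>set r. m < N)"

definition load_in :: "flow list \<Rightarrow> nat list \<Rightarrow> nat \<Rightarrow> nat \<Rightarrow> real" where
  "load_in F r i m = (\<Sum>l | l < length F \<and> src_sw (F ! l) = i \<and> r ! l = m. dem (F ! l))"

definition load_out :: "flow list \<Rightarrow> nat list \<Rightarrow> nat \<Rightarrow> nat \<Rightarrow> real" where
  "load_out F r j m = (\<Sum>l | l < length F \<and> dst_sw (F ! l) = j \<and> r ! l = m. dem (F ! l))"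

definition congestion :: "nat \<Rightarrow> nat \<Rightarrow> flow list \<Rightarrow> nat list \<Rightarrow> real" where
  "congestion N R F r = Max {max (load_in F r i m) (load_out F r i m) | i m. i < R \<and> m < N}"

definition det_online :: "nat \<Rightarrow> nat \<Rightarrow> (flow list \<Rightarrow> nat list) \<Rightarrow> bool" where
  "det_online N R A \<longleftrightarrow> (\<forall>F. valid_seq N R F \<longrightarrow>
      is_routing N F (A F) \<and> (\<forall>n. A (take n F) = take n (A F)))"

definition rand_online :: "nat \<Rightarrow> nat \<Rightarrow> 'a measure \<Rightarrow> ('a \<Rightarrow> flow list \<Rightarrow> nat list) \<Rightarrow> bool" where
  "rand_online N R M Alg \<longleftrightarrow> prob_space M
     \<and> (\<forall>w\<in>space M. det_online N R (Alg w))
     \<and> (\<forall>F. valid_seq N R F \<longrightarrow> (\<lambda>w. Alg w F) \<in> measurable M (count_space UNIV))"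

end

theory Submission
  imports Defs
begin

definition common0 :: "nat \<Rightarrow> nat \<Rightarrow> flow list" where
  "common0 N k = map (\<lambda>j. Flow (3*k) j (3*k+1) j 1) [0..<N-1]
     @ map (\<lambda>j. Flow (3*k+1) j (3*k+2) j 1) [0..<N-1]"

definition opt :: "nat \<Rightarrow> nat \<Rightarrow> bool \<Rightarrow> flow list" where
  "opt N k t = (if t then [Flow (3*k) (N-1) (3*k+2) (N-1) 1]
     else [Flow (3*k) (N-1) (3*k) 0 1, Flow (3*k+1) (N-1) (3*k) 1 1])"

definition good :: "flow list \<Rightarrow> nat list \<Rightarrow> bool" where
  "good F r \<longleftrightarrow> (\<forall>l1 l2. l1 < length F \<longrightarrow> l2 < length F \<longrightarrow> l1 \<noteq> l2 \<longrightarrow>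
     (src_sw (F!l1) = src_sw (F!l2) \<or> dst_sw (F!l1) = dst_sw (F!l2)) \<longrightarrow> r!l1 \<noteq> r!l2)"

lemma core:
  assumes N2: "N \<ge> 2" and det: "det_online N R A"
    and vF: "valid_seq N R (P @ common0 N k @ opt N k True @ Q)"
    and vF': "valid_seq N R (P @ common0 N k @ opt N k False @ Q')"
    and g: "good (P @ common0 N k @ opt N k True @ Q) (A (P @ common0 N k @ opt N k True @ Q))"
    and g': "good (P @ common0 N k @ opt N k False @ Q') (A (P @ common0 N k @ opt N k False @ Q'))"
  shows False
proof -
  obtain M where NM: "N = Suc M" using N2 by (cases N) auto
  define F where "F = P @ common0 N k @ opt N k True @ Q"
  define F' where "F' = P @ common0 N k @ opt N k False @ Q'"
  define r where "r = A F"
  define r' where "r' = A F'"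
  define p where "p = length P"
  define n0 where "n0 = p + 2*(N-1)"
  have rt: "is_routing N F r" using det vF unfolding det_online_def F_def r_def by blast
  have rt': "is_routing N F' r'" using det vF' unfolding det_online_def F'_def r'_def by blast
  have tk: "take n0 F = take n0 F'"
    unfolding F_def F'_def n0_def p_def common0_def by simp
  have "A (take n0 F) = take n0 r" using det vF unfolding det_online_def F_def r_def by blast
  moreover have "A (take n0 F') = take n0 r'" using det vF' unfolding det_online_def F'_def r'_def by blast
  ultimately have "take n0 r = take n0 r'" using tk by simp
  hence eq: "\<And>l. l < n0 \<Longrightarrow> r!l = r'!l" by (metis nth_take)
  have lenF: "length F = p + 2*(N-1) + 1 + length Q"
    unfolding F_def p_def common0_def opt_def by simp
  have lenF': "length F' = p + 2*(N-1) + 2 + length Q'"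
    unfolding F'_def p_def common0_def opt_def by simp
  have lr: "length r = length F" using rt unfolding is_routing_def by simp
  have lr': "length r' = length F'" using rt' unfolding is_routing_def by simp
  have rN: "\<And>l. l < length F \<Longrightarrow> r!l < N" using rt lr unfolding is_routing_def
    by (metis nth_mem)
  have rN': "\<And>l. l < length F' \<Longrightarrow> r'!l < N" using rt' lr' unfolding is_routing_def
    by (metis nth_mem)
  have h1: "\<And>j. j < N-1 \<Longrightarrow> F!(p+j) = Flow (3*k) j (3*k+1) j 1"
    unfolding F_def p_def common0_def by (simp add: nth_append)
  have h2: "\<And>j. j < N-1 \<Longrightarrow> F!(p+(N-1)+j) = Flow (3*k+1) j (3*k+2) j 1"
    unfolding F_def p_def common0_def NM by (simp add: nth_append)
  have h3: "F!(p+2*(N-1)) = Flow (3*k) (N-1) (3*k+2) (N-1) 1"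
    unfolding F_def p_def common0_def opt_def by (simp add: nth_append)
  have h1': "\<And>j. j < N-1 \<Longrightarrow> F'!(p+j) = Flow (3*k) j (3*k+1) j 1"
    unfolding F'_def p_def common0_def by (simp add: nth_append)
  have h2': "\<And>j. j < N-1 \<Longrightarrow> F'!(p+(N-1)+j) = Flow (3*k+1) j (3*k+2) j 1"
    unfolding F'_def p_def common0_def NM by (simp add: nth_append)
  have h4: "F'!(p+2*(N-1)) = Flow (3*k) (N-1) (3*k) 0 1"
    unfolding F'_def p_def common0_def opt_def by (simp add: nth_append)
  have h5: "F'!(p+2*(N-1)+1) = Flow (3*k+1) (N-1) (3*k) 1 1"
    unfolding F'_def p_def common0_def opt_def by (simp add: nth_append)
  have G: "\<And>l1 l2. l1 < length F \<Longrightarrow> l2 < length F \<Longrightarrow> l1 \<noteq> l2 \<Longrightarrow>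
     src_sw (F!l1) = src_sw (F!l2) \<or> dst_sw (F!l1) = dst_sw (F!l2) \<Longrightarrow> r!l1 \<noteq> r!l2"
    using g unfolding good_def F_def r_def by blast
  have G': "\<And>l1 l2. l1 < length F' \<Longrightarrow> l2 < length F' \<Longrightarrow> l1 \<noteq> l2 \<Longrightarrow>
     src_sw (F'!l1) = src_sw (F'!l2) \<or> dst_sw (F'!l1) = dst_sw (F'!l2) \<Longrightarrow> r'!l1 \<noteq> r'!l2"
    using g' unfolding good_def F'_def r'_def by blast
  define V1 where "V1 = (\<lambda>j. r!(p+j)) ` {..<N-1}"
  define V2 where "V2 = (\<lambda>j. r!(p+(N-1)+j)) ` {..<N-1}"
  have inj1: "inj_on (\<lambda>j. r!(p+j)) {..<N-1}"
  proof (rule inj_onI, rule ccontr)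
    fix a b assume "a \<in> {..<N-1}" "b \<in> {..<N-1}" "r!(p+a) = r!(p+b)" "a \<noteq> b"
    thus False using G[of "p+a" "p+b"] h1 lenF by (auto simp: NM)
  qed
  have inj2: "inj_on (\<lambda>j. r!(p+(N-1)+j)) {..<N-1}"
  proof (rule inj_onI, rule ccontr)
    fix a b assume "a \<in> {..<N-1}" "b \<in> {..<N-1}" "r!(p+(N-1)+a) = r!(p+(N-1)+b)" "a \<noteq> b"
    thus False using G[of "p+(N-1)+a" "p+(N-1)+b"] h2 lenF by (auto simp: NM)
  qed
  have c1: "card V1 = N-1" unfolding V1_def using card_image[OF inj1] by simp
  have c2: "card V2 = N-1" unfolding V2_def using card_image[OF inj2] by simp
  have s1: "V1 \<subseteq> {..<N}" unfolding V1_def using rN lenF by (auto simp: NM)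
  have s2: "V2 \<subseteq> {..<N}" unfolding V2_def using rN lenF by (auto simp: NM)
  have d1: "card ({..<N} - V1) = 1" using c1 s1 N2 by (simp add: card_Diff_subset finite_subset)
  have d2: "card ({..<N} - V2) = 1" using c2 s2 N2 by (simp add: card_Diff_subset finite_subset)
  define z where "z = r!(p+2*(N-1))"
  define x where "x = r'!(p+2*(N-1))"
  define y where "y = r'!(p+2*(N-1)+1)"
  have z1: "z \<in> {..<N} - V1"
  proof -
    have "z < N" unfolding z_def using rN lenF by simp
    moreover have "z \<notin> V1"
    proof
      assume "z \<in> V1"
      then obtain j where "j < N-1" "z = r!(p+j)" unfolding V1_def by (auto simp: NM)
      thus False using G[of "p+j" "p+2*(N-1)"] h1 h3 lenF unfolding z_def by (auto simp: NM)
    qed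
    ultimately show ?thesis by (auto simp: NM)
  qed
  have z2: "z \<in> {..<N} - V2"
  proof -
    have "z < N" unfolding z_def using rN lenF by simp
    moreover have "z \<notin> V2"
    proof
      assume "z \<in> V2"
      then obtain j where "j < N-1" "z = r!(p+(N-1)+j)" unfolding V2_def by (auto simp: NM)
      thus False using G[of "p+(N-1)+j" "p+2*(N-1)"] h2 h3 lenF unfolding z_def by (auto simp: NM)
    qed
    ultimately show ?thesis by (auto simp: NM)
  qed
  have x1: "x \<in> {..<N} - V1"
  proof -
    have "x < N" unfolding x_def using rN' lenF' by simp
    moreover have "x \<notin> V1"
    proof
      assume "x \<in> V1"
      then obtain j where j: "j < N-1" "x = r!(p+j)" unfolding V1_def by (auto simp: NM)
      hence "x = r'!(p+j)" using eq[of "p+j"] unfolding n0_def by simp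
      thus False using G'[of "p+j" "p+2*(N-1)"] h1' h4 lenF' j unfolding x_def by (auto simp: NM)
    qed
    ultimately show ?thesis by (auto simp: NM)
  qed
  have y2: "y \<in> {..<N} - V2"
  proof -
    have "y < N" unfolding y_def using rN' lenF' by simp
    moreover have "y \<notin> V2"
    proof
      assume "y \<in> V2"
      then obtain j where j: "j < N-1" "y = r!(p+(N-1)+j)" unfolding V2_def by (auto simp: NM)
      hence "y = r'!(p+(N-1)+j)" using eq[of "p+(N-1)+j"] unfolding n0_def by simp
      thus False using G'[of "p+(N-1)+j" "p+2*(N-1)+1"] h2' h5 lenF' j unfolding y_def by (auto simp: NM)
    qed
    ultimately show ?thesis by (auto simp: NM)
  qed
  have xy: "x \<noteq> y" using G'[of "p+2*(N-1)" "p+2*(N-1)+1"] h4 h5 lenF' unfolding x_def y_def by (auto simp: NM)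
  have "z = x" using d1 z1 x1 by (metis card_1_singletonE singletonD)
  moreover have "z = y" using d2 z2 y2 by (metis card_1_singletonE singletonD)
  ultimately show False using xy by simp
qed


fun G :: "nat \<Rightarrow> (nat \<Rightarrow> bool) \<Rightarrow> nat \<Rightarrow> flow list" where
  "G N c 0 = []"
| "G N c (Suc n) = G N c n @ (common0 N n @ opt N n (c n))"

lemma G_prefix: "k \<le> n \<Longrightarrow> \<exists>Q. G N c n = G N c k @ Q"
proof (induction n)
  case 0 thus ?case by simp
next
  case (Suc n)
  show ?case
  proof (cases "k = Suc n")
    case True thus ?thesis by (rule_tac x="[]" in exI) simp
  next
    case False
    then obtain Q where "G N c n = G N c k @ Q" using Suc by auto
    thus ?thesis by simp
  qed
qed

lemma G_cong: "(\<forall>i<k. c i = c' i) \<Longrightarrow> G N c k = G N c' k"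
  by (induction k) auto

lemma phase_set: "f \<in> set (common0 N n @ opt N n t) \<Longrightarrow> N \<ge> 2 \<Longrightarrow> 3*n+3 \<le> R \<Longrightarrow>
   valid_flow N R f \<and> dem f = 1 \<and> src_sw f < 3*n+3 \<and> dst_sw f < 3*n+3"
proof -
  assume f: "f \<in> set (common0 N n @ opt N n t)" and N: "N \<ge> 2" and R: "3*n+3 \<le> R"
  have "(\<exists>j<N-1. f = Flow (3*n) j (3*n+1) j 1) \<or> (\<exists>j<N-1. f = Flow (3*n+1) j (3*n+2) j 1)
     \<or> f = Flow (3*n) (N-1) (3*n+2) (N-1) 1 \<or> f = Flow (3*n) (N-1) (3*n) 0 1 \<or> f = Flow (3*n+1) (N-1) (3*n) 1 1"
    using f unfolding common0_def opt_def by (cases t) auto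
  thus ?thesis using N R unfolding valid_flow_def by auto
qed
lemma G_set: "f \<in> set (G N c n) \<Longrightarrow> N \<ge> 2 \<Longrightarrow> 3*n \<le> R \<Longrightarrow>
   valid_flow N R f \<and> dem f = 1 \<and> src_sw f < 3*n \<and> dst_sw f < 3*n"
proof (induction n)
  case 0 thus ?case by simp
next
  case (Suc n)
  show ?case
  proof (cases "f \<in> set (G N c n)")
    case True thus ?thesis using Suc by auto
  next
    case False
    hence "f \<in> set (common0 N n @ opt N n (c n))" using Suc by simp
    thus ?thesis using Suc.prems phase_set[of f N n "c n" R] by simp
  qed
qed

lemma phase_dist:
  assumes "N \<ge> 2"
  shows "distinct (map (\<lambda>f. (src_sw f, src_idx f)) (common0 N n @ opt N n t))"
    "distinct (map (\<lambda>f. (dst_sw f, dst_idx f)) (common0 N n @ opt N n t))"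
proof -
  obtain M where NM: "N = Suc (Suc M)" using assms by (metis add_2_eq_Suc le_Suc_ex)
  show "distinct (map (\<lambda>f. (src_sw f, src_idx f)) (common0 N n @ opt N n t))"
    unfolding common0_def opt_def NM by (cases t) (auto simp: distinct_map inj_on_def)
  show "distinct (map (\<lambda>f. (dst_sw f, dst_idx f)) (common0 N n @ opt N n t))"
    unfolding common0_def opt_def NM by (cases t) (auto simp: distinct_map inj_on_def)
qed
lemma G_dist:
  assumes "N \<ge> 2" "3*n \<le> R"
  shows "distinct (map (\<lambda>f. (src_sw f, src_idx f)) (G N c n)) \<and>
         distinct (map (\<lambda>f. (dst_sw f, dst_idx f)) (G N c n))"
  using assms
proof (induction n)
  case 0 thus ?case by simp
next
  case (Suc n)
  have IH: "distinct (map (\<lambda>f. (src_sw f, src_idx f)) (G N c n)) \<and>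
         distinct (map (\<lambda>f. (dst_sw f, dst_idx f)) (G N c n))" using Suc by simp
  have lo: "\<And>f. f \<in> set (G N c n) \<Longrightarrow> src_sw f < 3*n \<and> dst_sw f < 3*n"
    using G_set[of _ N c n R] Suc.prems by auto
  have hi: "\<And>f. f \<in> set (common0 N n @ opt N n (c n)) \<Longrightarrow> src_sw f \<ge> 3*n \<and> dst_sw f \<ge> 3*n"
    unfolding common0_def opt_def by (auto split: if_splits)
  have d1: "set (map (\<lambda>f. (src_sw f, src_idx f)) (G N c n)) \<inter> set (map (\<lambda>f. (src_sw f, src_idx f)) (common0 N n @ opt N n (c n))) = {}"
  proof (rule equals0I)
    fix x assume "x \<in> set (map (\<lambda>f. (src_sw f, src_idx f)) (G N c n)) \<inter> set (map (\<lambda>f. (src_sw f, src_idx f)) (common0 N n @ opt N n (c n)))"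
    then obtain f g where "f \<in> set (G N c n)" "g \<in> set (common0 N n @ opt N n (c n))" "x = (src_sw f, src_idx f)" "x = (src_sw g, src_idx g)"
      by (auto simp only: set_map image_iff Int_iff)
    thus False using lo hi by fastforce
  qed
  have d2: "set (map (\<lambda>f. (dst_sw f, dst_idx f)) (G N c n)) \<inter> set (map (\<lambda>f. (dst_sw f, dst_idx f)) (common0 N n @ opt N n (c n))) = {}"
  proof (rule equals0I)
    fix x assume "x \<in> set (map (\<lambda>f. (dst_sw f, dst_idx f)) (G N c n)) \<inter> set (map (\<lambda>f. (dst_sw f, dst_idx f)) (common0 N n @ opt N n (c n)))"
    then obtain f g where "f \<in> set (G N c n)" "g \<in> set (common0 N n @ opt N n (c n))" "x = (dst_sw f, dst_idx f)" "x = (dst_sw g, dst_idx g)"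
      by (auto simp only: set_map image_iff Int_iff)
    thus False using lo hi by fastforce
  qed
  have p: "distinct (map (\<lambda>f. (src_sw f, src_idx f)) (common0 N n @ opt N n (c n)))"
    "distinct (map (\<lambda>f. (dst_sw f, dst_idx f)) (common0 N n @ opt N n (c n)))"
    using phase_dist[OF Suc.prems(1)] by blast+
  show ?case unfolding G.simps map_append[of _ "G N c n"] distinct_append
    using IH p d1 d2 by blast
qed

lemma filter_le1:
  assumes "distinct (map g xs)"
  shows "length (filter (\<lambda>f. g f = x) xs) \<le> 1"
  using assms
proof (induction xs)
  case Nil thus ?case by simp
next
  case (Cons a xs)
  show ?case
  proof (cases "g a = x")
    case True
    hence "filter (\<lambda>f. g f = x) xs = []" using Cons.prems by (auto simp: filter_empty_conv image_iff)
    thus ?thesis using True by simp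
  next
    case False thus ?thesis using Cons by simp
  qed
qed

lemma sum_dem1: "(\<forall>f\<in>set xs. dem f = 1) \<Longrightarrow> sum_list (map dem xs) = real (length xs)"
  by (induction xs) auto

lemma G_valid:
  assumes "N \<ge> 2" "3*n \<le> R"
  shows "valid_seq N R (G N c n)" "\<forall>f\<in>set (G N c n). dem f = 1"
proof -
  have d: "\<forall>f\<in>set (G N c n). dem f = 1" using G_set[OF _ assms(1,2)] by blast
  show "\<forall>f\<in>set (G N c n). dem f = 1" by (fact d)
  have v: "\<forall>f\<in>set (G N c n). valid_flow N R f" using G_set[OF _ assms(1,2)] by blast
  have s: "\<And>i k. sum_list (map dem (filter (\<lambda>f. src_sw f = i \<and> src_idx f = k) (G N c n))) \<le> 1"
  proof -
    fix i k
    have "filter (\<lambda>f. src_sw f = i \<and> src_idx f = k) (G N c n)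
        = filter (\<lambda>f. (src_sw f, src_idx f) = (i,k)) (G N c n)" by simp
    moreover have "length (filter (\<lambda>f. (src_sw f, src_idx f) = (i,k)) (G N c n)) \<le> 1"
      by (rule filter_le1[of "\<lambda>f. (src_sw f, src_idx f)" "G N c n" "(i,k)"]) (use G_dist[OF assms] in simp)
    moreover have "sum_list (map dem (filter (\<lambda>f. src_sw f = i \<and> src_idx f = k) (G N c n)))
       = real (length (filter (\<lambda>f. src_sw f = i \<and> src_idx f = k) (G N c n)))"
      by (rule sum_dem1) (use d in simp)
    ultimately show "sum_list (map dem (filter (\<lambda>f. src_sw f = i \<and> src_idx f = k) (G N c n))) \<le> 1"
      by simp
  qed
  have t: "\<And>i k. sum_list (map dem (filter (\<lambda>f. dst_sw f = i \<and> dst_idx f = k) (G N c n))) \<le> 1"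
  proof -
    fix i k
    have "filter (\<lambda>f. dst_sw f = i \<and> dst_idx f = k) (G N c n)
        = filter (\<lambda>f. (dst_sw f, dst_idx f) = (i,k)) (G N c n)" by simp
    moreover have "length (filter (\<lambda>f. (dst_sw f, dst_idx f) = (i,k)) (G N c n)) \<le> 1"
      by (rule filter_le1[of "\<lambda>f. (dst_sw f, dst_idx f)" "G N c n" "(i,k)"]) (use G_dist[OF assms] in simp)
    moreover have "sum_list (map dem (filter (\<lambda>f. dst_sw f = i \<and> dst_idx f = k) (G N c n)))
       = real (length (filter (\<lambda>f. dst_sw f = i \<and> dst_idx f = k) (G N c n)))"
      by (rule sum_dem1) (use d in simp)
    ultimately show "sum_list (map dem (filter (\<lambda>f. dst_sw f = i \<and> dst_idx f = k) (G N c n))) \<le> 1"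
      by simp
  qed
  show "valid_seq N R (G N c n)" unfolding valid_seq_def using v s t by blast
qed


lemma fin_cong_set: "finite {max (load_in F r i m) (load_out F r i m) | i m. i < R \<and> m < N}"
  by (rule finite_image_set2) auto

lemma cong_ge: "i < R \<Longrightarrow> m < N \<Longrightarrow> max (load_in F r i m) (load_out F r i m) \<le> congestion N R F r"
  unfolding congestion_def by (rule Max_ge[OF fin_cong_set]) auto

lemma load_in_card:
  assumes "\<forall>f\<in>set F. dem f = 1"
  shows "load_in F r i m = real (card {l. l < length F \<and> src_sw (F!l) = i \<and> r!l = m})"
proof -
  have "load_in F r i m = (\<Sum>l | l < length F \<and> src_sw (F ! l) = i \<and> r ! l = m. (1::real))"
    unfolding load_in_def by (rule sum.cong) (auto simp: assms)
  thus ?thesis by simp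
qed

lemma load_out_card:
  assumes "\<forall>f\<in>set F. dem f = 1"
  shows "load_out F r i m = real (card {l. l < length F \<and> dst_sw (F!l) = i \<and> r!l = m})"
proof -
  have "load_out F r i m = (\<Sum>l | l < length F \<and> dst_sw (F ! l) = i \<and> r ! l = m. (1::real))"
    unfolding load_out_def by (rule sum.cong) (auto simp: assms)
  thus ?thesis by simp
qed

lemma cong_low:
  assumes d: "\<forall>f\<in>set F. dem f = 1" and vs: "valid_seq N R F" and ne: "F \<noteq> []"
    and rt: "is_routing N F r"
  shows "(if good F r then 1 else 2) \<le> congestion N R F r"
proof -
  have vf: "\<And>l. l < length F \<Longrightarrow> valid_flow N R (F!l)" using vs unfolding valid_seq_def
    by (metis nth_mem)
  have rN: "\<And>l. l < length F \<Longrightarrow> r!l < N" using rt unfolding is_routing_def by (metis nth_mem)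
  show ?thesis
  proof (cases "good F r")
    case True
    let ?i = "src_sw (F!0)" and ?m = "r!0"
    have l0: "0 < length F" using ne by simp
    have fin: "finite {l. l < length F \<and> src_sw (F!l) = ?i \<and> r!l = ?m}" by simp
    have "0 \<in> {l. l < length F \<and> src_sw (F!l) = ?i \<and> r!l = ?m}" using l0 by simp
    hence "card {l. l < length F \<and> src_sw (F!l) = ?i \<and> r!l = ?m} \<noteq> 0" using fin by auto
    hence "card {l. l < length F \<and> src_sw (F!l) = ?i \<and> r!l = ?m} \<ge> 1" by linarith
    hence "load_in F r ?i ?m \<ge> 1" using load_in_card[OF d] by simp
    moreover have "?i < R" using vf[OF l0] unfolding valid_flow_def by simp
    moreover have "?m < N" using rN[OF l0] .
    ultimately have "1 \<le> congestion N R F r" using cong_ge[of ?i R ?m N F r] by linarith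
    thus ?thesis using True by simp
  next
    case False
    then obtain l1 l2 where l: "l1 < length F" "l2 < length F" "l1 \<noteq> l2"
      "src_sw (F!l1) = src_sw (F!l2) \<or> dst_sw (F!l1) = dst_sw (F!l2)" "r!l1 = r!l2"
      unfolding good_def by blast
    have m: "r!l1 < N" using rN l by simp
    have "2 \<le> congestion N R F r"
    proof (cases "src_sw (F!l1) = src_sw (F!l2)")
      case True
      let ?i = "src_sw (F!l1)"
      have "{l1,l2} \<subseteq> {l. l < length F \<and> src_sw (F!l) = ?i \<and> r!l = r!l1}" using l True by auto
      hence "card {l1,l2} \<le> card {l. l < length F \<and> src_sw (F!l) = ?i \<and> r!l = r!l1}"
        by (rule card_mono[rotated]) simp
      hence "load_in F r ?i (r!l1) \<ge> 2" using load_in_card[OF d] l(3) by simp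
      moreover have "?i < R" using vf[OF l(1)] unfolding valid_flow_def by simp
      ultimately show ?thesis using cong_ge[of ?i R "r!l1" N F r] m by linarith
    next
      case False
      hence T: "dst_sw (F!l1) = dst_sw (F!l2)" using l by simp
      let ?i = "dst_sw (F!l1)"
      have "{l1,l2} \<subseteq> {l. l < length F \<and> dst_sw (F!l) = ?i \<and> r!l = r!l1}" using l T by auto
      hence "card {l1,l2} \<le> card {l. l < length F \<and> dst_sw (F!l) = ?i \<and> r!l = r!l1}"
        by (rule card_mono[rotated]) simp
      hence "load_out F r ?i (r!l1) \<ge> 2" using load_out_card[OF d] l(3) by simp
      moreover have "?i < R" using vf[OF l(1)] unfolding valid_flow_def by simp
      ultimately show ?thesis using cong_ge[of ?i R "r!l1" N F r] m by linarith
    qed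
    thus ?thesis using False by simp
  qed
qed

lemma cong_up:
  assumes d: "\<forall>f\<in>set F. dem f = 1" and R: "R > 0" and N: "N > 0"
  shows "congestion N R F r \<le> real (length F)"
  unfolding congestion_def
proof (rule Max.boundedI[OF fin_cong_set])
  show "{max (load_in F r i m) (load_out F r i m) |i m. i < R \<and> m < N} \<noteq> {}" using R N by blast
next
  fix a assume "a \<in> {max (load_in F r i m) (load_out F r i m) |i m. i < R \<and> m < N}"
  then obtain i m where a: "a = max (load_in F r i m) (load_out F r i m)" by blast
  have "card {l. l < length F \<and> src_sw (F!l) = i \<and> r!l = m} \<le> card {..<length F}"
    by (rule card_mono) auto
  moreover have "card {l. l < length F \<and> dst_sw (F!l) = i \<and> r!l = m} \<le> card {..<length F}"
    by (rule card_mono) auto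
  ultimately show "a \<le> real (length F)" unfolding a load_in_card[OF d] load_out_card[OF d] by simp
qed

lemma first_diff_contra:
  assumes N2: "N \<ge> 2" and det: "det_online N R A" and SR: "3*S \<le> R" and k: "k < S"
    and same: "\<forall>i<k. c i = c' i" and ck: "c k" and ck': "\<not> c' k"
    and g: "good (G N c S) (A (G N c S))" and g': "good (G N c' S) (A (G N c' S))"
  shows False
proof -
  obtain Q where Q: "G N c S = G N c (Suc k) @ Q" using G_prefix[of "Suc k" S N c] k by auto
  obtain Q' where Q': "G N c' S = G N c' (Suc k) @ Q'" using G_prefix[of "Suc k" S N c'] k by auto
  have P: "G N c' k = G N c k" using G_cong[of k c' c] same by simp
  have e1: "G N c S = G N c k @ common0 N k @ opt N k True @ Q" using Q ck by simp
  have e2: "G N c' S = G N c k @ common0 N k @ opt N k False @ Q'" using Q' ck' P by simp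
  show False
    using core[OF N2 det, of "G N c k" k Q Q'] G_valid(1)[OF N2 SR, of c] G_valid(1)[OF N2 SR, of c']
      g g' e1 e2 by simp
qed

lemma G_ne: "n > 0 \<Longrightarrow> G N c n \<noteq> []"
  by (cases n) (auto simp: opt_def)

lemma exists_ge:
  fixes f :: "'b \<Rightarrow> real"
  assumes "finite L" "L \<noteq> {}" "B \<le> sum f L"
  shows "\<exists>x\<in>L. B / card L \<le> f x"
proof (rule ccontr)
  assume "\<not> ?thesis"
  hence "\<forall>x\<in>L. f x < B / card L" by auto
  hence "sum f L < sum (\<lambda>_. B / card L) L" using assms by (intro sum_strict_mono) auto
  also have "\<dots> = B" using assms by simp
  finally show False using assms by simp
qed

theorem mainTheorem6:
  fixes N R :: nat and M :: "'a measure" and Alg :: "'a \<Rightarrow> flow list \<Rightarrow> nat list"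
  assumes "N \<ge> 2" and "R \<ge> 3"
    and "rand_online N R M Alg"
  shows "\<exists>F. valid_seq N R F \<and> (\<forall>f\<in>set F. dem f = 1)
           \<and> (\<integral>w. congestion N R F (Alg w F) \<partial>M) \<ge> 2 - 1 / 2 ^ (R div 3)"
proof -
  note N2 = assms(1)
  have ps: "prob_space M" and dets: "\<forall>w\<in>space M. det_online N R (Alg w)"
    and meas: "\<forall>F. valid_seq N R F \<longrightarrow> (\<lambda>w. Alg w F) \<in> measurable M (count_space UNIV)"
    using assms(3) unfolding rand_online_def by auto
  interpret prob_space M by (fact ps)
  define S where "S = R div 3"
  have S1: "S > 0" and SR: "3*S \<le> R" using assms(2) unfolding S_def by auto
  define L where "L = {cs::bool list. length cs = S}"
  have Leq: "L = {cs. set cs \<subseteq> UNIV \<and> length cs = S}" unfolding L_def by simp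
  have finL: "finite L" unfolding Leq by (rule finite_lists_length_eq) simp
  have cardL: "card L = 2 ^ S" unfolding L_def
    using card_lists_length_eq[of "UNIV::bool set" S] by (simp add: card_UNIV_bool)
  have Lne: "L \<noteq> {}" unfolding L_def by (metis (mono_tags) empty_iff length_replicate mem_Collect_eq)
  define Fs where "Fs cs = G N (\<lambda>i. cs ! i) S" for cs
  have vF: "valid_seq N R (Fs cs)" and dF: "\<forall>f\<in>set (Fs cs). dem f = 1" for cs
    unfolding Fs_def using G_valid[OF N2 SR] by auto
  have neF: "Fs cs \<noteq> []" for cs unfolding Fs_def using G_ne S1 by auto
  define g where "g cs w = congestion N R (Fs cs) (Alg w (Fs cs))" for cs w
  have bnd: "1 \<le> g cs w \<and> g cs w \<le> real (length (Fs cs))" if "w \<in> space M" for cs w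
  proof -
    have rt: "is_routing N (Fs cs) (Alg w (Fs cs))" using dets that vF unfolding det_online_def by blast
    have "(if good (Fs cs) (Alg w (Fs cs)) then 1 else 2) \<le> g cs w"
      unfolding g_def by (rule cong_low[OF dF vF neF rt])
    hence "1 \<le> g cs w" by (simp split: if_splits)
    moreover have "g cs w \<le> real (length (Fs cs))" unfolding g_def
      by (rule cong_up[OF dF]) (use assms in auto)
    ultimately show ?thesis by simp
  qed
  have int: "integrable M (g cs)" for cs
  proof (rule integrable_const_bound[where B="real (length (Fs cs))"])
    show "AE x in M. norm (g cs x) \<le> real (length (Fs cs))"
    proof (rule AE_I2)
      fix x assume "x \<in> space M"
      thus "norm (g cs x) \<le> real (length (Fs cs))" using bnd[of x cs] by simp
    qed
    have "(\<lambda>w. congestion N R (Fs cs) (Alg w (Fs cs))) = (\<lambda>r. congestion N R (Fs cs) r) \<circ> (\<lambda>w. Alg w (Fs cs))"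
      by auto
    moreover have "(\<lambda>r. congestion N R (Fs cs) r) \<circ> (\<lambda>w. Alg w (Fs cs)) \<in> borel_measurable M"
      by (rule measurable_comp[OF meas[rule_format, OF vF]]) simp
    ultimately show "g cs \<in> borel_measurable M" unfolding g_def[abs_def] by simp
  qed
  have pt: "2 * real (card L) - 1 \<le> (\<Sum>cs\<in>L. g cs w)" if w: "w \<in> space M" for w
  proof -
    define Gd where "Gd = {cs\<in>L. good (Fs cs) (Alg w (Fs cs))}"
    have det: "det_online N R (Alg w)" using dets w by blast
    have "card Gd \<le> Suc 0"
    proof (subst card_le_Suc0_iff_eq)
      show "finite Gd" unfolding Gd_def using finL by simp
      show "\<forall>x\<in>Gd. \<forall>y\<in>Gd. x = y"
      proof (intro ballI, rule ccontr)
        fix x y assume x: "x \<in> Gd" and y: "y \<in> Gd" and ne: "x \<noteq> y"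
        have lx: "length x = S" and ly: "length y = S" using x y unfolding Gd_def L_def by auto
        have ex: "\<exists>i. i < S \<and> x!i \<noteq> y!i"
        proof (rule ccontr)
          assume "\<not> (\<exists>i. i < S \<and> x!i \<noteq> y!i)"
          hence "x = y" using lx ly by (intro nth_equalityI) auto
          thus False using ne by simp
        qed
        define k where "k = (LEAST i. i < S \<and> x!i \<noteq> y!i)"
        have k: "k < S" "x!k \<noteq> y!k" using LeastI_ex[OF ex] unfolding k_def by auto
        have same: "\<forall>i<k. x!i = y!i"
        proof (intro allI impI)
          fix i assume "i < k"
          hence "\<not> (i < S \<and> x!i \<noteq> y!i)" using not_less_Least unfolding k_def by blast
          thus "x!i = y!i" using \<open>i < k\<close> k by auto
        qed
        have gx: "good (G N (\<lambda>i. x!i) S) (Alg w (G N (\<lambda>i. x!i) S))"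
          using x unfolding Gd_def Fs_def by simp
        have gy: "good (G N (\<lambda>i. y!i) S) (Alg w (G N (\<lambda>i. y!i) S))"
          using y unfolding Gd_def Fs_def by simp
        show False
        proof (cases "x!k")
          case True
          thus False using first_diff_contra[OF N2 det SR k(1), of "\<lambda>i. x!i" "\<lambda>i. y!i"]
              same k(2) gx gy by auto
        next
          case False
          thus False using first_diff_contra[OF N2 det SR k(1), of "\<lambda>i. y!i" "\<lambda>i. x!i"]
              same k(2) gx gy by auto
        qed
      qed
    qed
    have "(\<Sum>cs\<in>L. (if cs \<in> Gd then 1 else 2 :: real)) = (\<Sum>cs\<in>L. 2 - (if cs \<in> Gd then 1 else 0))"
      by (rule sum.cong) auto
    also have "\<dots> = 2 * real (card L) - (\<Sum>cs\<in>L. (if cs \<in> Gd then 1 else 0 :: real))"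
      by (simp add: sum_subtractf)
    also have "(\<Sum>cs\<in>L. (if cs \<in> Gd then 1 else 0 :: real)) = real (card {cs\<in>L. cs \<in> Gd})"
      using sum.inter_filter[OF finL, of "\<lambda>_. (1::real)" "\<lambda>cs. cs \<in> Gd"] by simp
    also have "{cs\<in>L. cs \<in> Gd} = Gd" unfolding Gd_def by auto
    finally have e: "(\<Sum>cs\<in>L. (if cs \<in> Gd then 1 else 2 :: real)) = 2 * real (card L) - real (card Gd)" .
    have "(\<Sum>cs\<in>L. (if cs \<in> Gd then 1 else 2 :: real)) \<le> (\<Sum>cs\<in>L. g cs w)"
    proof (rule sum_mono)
      fix cs assume "cs \<in> L"
      have rt: "is_routing N (Fs cs) (Alg w (Fs cs))" using det vF unfolding det_online_def by blast
      have "(if good (Fs cs) (Alg w (Fs cs)) then 1 else 2) \<le> g cs w"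
        unfolding g_def by (rule cong_low[OF dF vF neF rt])
      thus "(if cs \<in> Gd then 1 else 2 :: real) \<le> g cs w" using \<open>cs \<in> L\<close> unfolding Gd_def by simp
    qed
    thus ?thesis using e \<open>card Gd \<le> Suc 0\<close> by linarith
  qed
  have "2 * real (card L) - 1 \<le> (\<integral>w. (\<Sum>cs\<in>L. g cs w) \<partial>M)"
    by (rule integral_ge_const) (use int pt in \<open>auto intro: AE_I2\<close>)
  also have "\<dots> = (\<Sum>cs\<in>L. (\<integral>w. g cs w \<partial>M))"
    by (rule Bochner_Integration.integral_sum) (rule int)
  finally obtain cs where cs: "cs \<in> L" "(2 * real (card L) - 1) / card L \<le> (\<integral>w. g cs w \<partial>M)"
    using exists_ge[OF finL Lne] by blast
  have "(2 * real (card L) - 1) / card L = (2 - 1 / 2 ^ (R div 3) :: real)"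
    unfolding cardL S_def by (simp add: field_simps)
  hence "2 - 1 / 2 ^ (R div 3) \<le> (\<integral>w. congestion N R (Fs cs) (Alg w (Fs cs)) \<partial>M)"
    using cs(2) unfolding g_def by simp
  thus ?thesis using vF dF by blast
qed

end
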